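(* Let $b \in \mathbb{Z}_{>0}$, let $\ell \ge 0$ be an integer, and let $X_b = \{0,1\}^\ell \times \{0,1,\dots,b\} \subseteq \mathbb{Z}^{\ell+1}$. Then the polyhedron $P = \{x \in \mathbb{R}^{\ell+1} : x_k \le 1 + \sum_{i=k+1}^{\ell+1}(b+1)^{-i}x_i \text{ for } k\in\{1,\dots,\ell\},\ x_{\ell+1}\le b,\ x_1 + \sum_{i=2}^{\ell+1}(b+1)^{-i}x_i \ge 0\}$ satisfies $P \cap \mathbb{Z}^{\ell+1} = X_b$. In particular, $\mathrm{rc}(X_b) \le \ell+2$.
   Context: $\mathrm{rc}(X)$ is the smallest number of facets of a polyhedron $P\subseteq\mathbb{R}^n$ with $P \cap \mathbb{Z}^n = X$. *)

theory Defs
  imports "HOL-Analysis.Analysis"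
begin

definition int_points :: "(real^'n) set" where
  "int_points = {x. \<forall>i. x $ i \<in> \<int>}"

definition rc :: "(real^'n) set \<Rightarrow> nat" where
  "rc X = (LEAST m. \<exists>P. polyhedron P \<and> P \<inter> int_points = X \<and> card {F. F facet_of P} = m)"

end

theory Submission imports Defs begin

lemma axis_inner_real: "axis i (a::real) \<bullet> (x::real^'n) = a * x $ i"
  by (simp add: inner_commute[of "axis i a"] inner_axis)

lemma facets_card_le:
  fixes S :: "'a::euclidean_space set"
  assumes fin: "finite F0" and S: "S = \<Inter>F0"
    and hs: "\<forall>h\<in>F0. \<exists>a b. a \<noteq> 0 \<and> h = {x. a \<bullet> x \<le> b}"
  shows "card {C. C facet_of S} \<le> card F0"
proof -
  define M where "M = {F. F \<subseteq> F0 \<and> S = affine hull S \<inter> \<Inter>F}"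
  have "S \<subseteq> affine hull S" by (rule hull_subset)
  then have "S = affine hull S \<inter> \<Inter>F0" using S by blast
  then have F0M: "F0 \<in> M" unfolding M_def by blast
  have "\<exists>F. F \<in> M \<and> (\<forall>G. G \<in> M \<longrightarrow> card F \<le> card G)"
    by (rule ex_has_least_nat[of "\<lambda>F. F \<in> M" F0 card, OF F0M])
  then obtain F where FM: "F \<in> M" and Fmin: "\<forall>G. G \<in> M \<longrightarrow> card F \<le> card G"
    by blast
  have FF0: "F \<subseteq> F0" and seq: "S = affine hull S \<inter> \<Inter>F" using FM unfolding M_def by blast+
  have finF: "finite F" using FF0 fin by (rule finite_subset)
  have "\<forall>h\<in>F. \<exists>a b. a \<noteq> 0 \<and> h = {x. a \<bullet> x \<le> b}" using hs FF0 by blast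
  then have "\<exists>a. \<forall>h\<in>F. \<exists>b. a h \<noteq> 0 \<and> h = {x. a h \<bullet> x \<le> b}" by (rule bchoice)
  then obtain a where a: "\<forall>h\<in>F. \<exists>b. a h \<noteq> 0 \<and> h = {x. a h \<bullet> x \<le> b}" by blast
  then have "\<exists>b. \<forall>h\<in>F. a h \<noteq> 0 \<and> h = {x. a h \<bullet> x \<le> b h}" by (rule bchoice)
  then obtain b where b: "\<forall>h\<in>F. a h \<noteq> 0 \<and> h = {x. a h \<bullet> x \<le> b h}" by blast
  have ab: "\<And>h. h \<in> F \<Longrightarrow> a h \<noteq> 0 \<and> h = {x. a h \<bullet> x \<le> b h}" using b by blast
  have psub: "S \<subset> affine hull S \<inter> \<Inter>F'" if F': "F' \<subset> F" for F'
  proof -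
    have "\<Inter>F \<subseteq> \<Inter>F'" using F' by blast
    then have sub: "S \<subseteq> affine hull S \<inter> \<Inter>F'" using seq by blast
    have "S \<noteq> affine hull S \<inter> \<Inter>F'"
    proof
      assume eq: "S = affine hull S \<inter> \<Inter>F'"
      have "F' \<subseteq> F0" using F' FF0 by blast
      then have "F' \<in> M" using eq unfolding M_def by blast
      then have "card F \<le> card F'" using Fmin by blast
      moreover have "card F' < card F" by (rule psubset_card_mono[OF finF F'])
      ultimately show False by linarith
    qed
    then show ?thesis using sub by (rule psubsetI[rotated])
  qed
  have "{C. C facet_of S} \<subseteq> (\<lambda>h. S \<inter> {x. a h \<bullet> x = b h}) ` F"
  proof
    fix C assume "C \<in> {C. C facet_of S}"
    then have "C facet_of S" by simp
    then have "\<exists>h. h \<in> F \<and> C = S \<inter> {x. a h \<bullet> x = b h}"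
      using facet_of_polyhedron_explicit[OF finF seq ab psub] by blast
    then show "C \<in> (\<lambda>h. S \<inter> {x. a h \<bullet> x = b h}) ` F" by blast
  qed
  then have "card {C. C facet_of S} \<le> card ((\<lambda>h. S \<inter> {x. a h \<bullet> x = b h}) ` F)"
    using finF by (intro card_mono) auto
  also have "\<dots> \<le> card F" using finF by (rule card_image_le)
  also have "\<dots> \<le> card F0" using fin FF0 by (rule card_mono)
  finally show ?thesis .
qed

lemma geo_tel:
  fixes B :: real assumes "B > 0" "j \<le> m"
  shows "(\<Sum>i=Suc j..m. (B-1)/B^i) = 1/B^j - 1/B^m"
  using assms(2)
proof (induction m rule: dec_induct)
  case base then show ?case by simp
next
  case (step n)
  have "(\<Sum>i=Suc j..Suc n. (B-1)/B^i) = (\<Sum>i=Suc j..n. (B-1)/B^i) + (B-1)/B^Suc n"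
    using step.hyps by (simp add: sum.cl_ivl_Suc)
  also have "\<dots> = 1/B^j - 1/B^n + (B-1)/B^Suc n" using step.IH by simp
  also have "\<dots> = 1/B^j - 1/B^Suc n"
  proof -
    have "(B-1)/B^Suc n = B/B^Suc n - 1/B^Suc n" by (rule diff_divide_distrib)
    moreover have "B/B^Suc n = 1/B^n" using assms(1) by simp
    ultimately show ?thesis by linarith
  qed
  finally show ?case .
qed

lemma tail_bound:
  fixes z :: "nat \<Rightarrow> int" and b :: int
  assumes b: "b > 0" and j: "j \<le> l+1" and ub: "\<forall>i\<in>{Suc j..l+1}. z i \<le> b"
  shows "(\<Sum>i=Suc j..l+1. real_of_int (z i) / (real_of_int b + 1)^i) < 1/(real_of_int b + 1)^j"
proof -
  define B where "B = real_of_int b + 1"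
  have B: "B > 0" using b unfolding B_def by simp
  have "(\<Sum>i=Suc j..l+1. real_of_int (z i) / B^i) \<le> (\<Sum>i=Suc j..l+1. (B-1) / B^i)"
  proof (rule sum_mono)
    fix i assume i: "i \<in> {Suc j..l+1}"
    have "z i \<le> b" using ub i by blast
    then have "real_of_int (z i) \<le> B - 1" unfolding B_def by simp
    moreover have "0 \<le> B^i" using B by simp
    ultimately show "real_of_int (z i) / B^i \<le> (B-1) / B^i" by (rule divide_right_mono)
  qed
  also have "\<dots> = 1/B^j - 1/B^(l+1)" by (rule geo_tel[OF B j])
  also have "\<dots> < 1/B^j"
  proof -
    have "0 < 1/B^(l+1)" using B by simp
    then show ?thesis by linarith
  qed
  finally show ?thesis unfolding B_def .
qed

lemma core:
  fixes z :: "nat \<Rightarrow> int" and b :: int and l :: nat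
  assumes b: "b > 0"
    and c1: "\<forall>k\<in>{1..l}. real_of_int (z k) \<le> 1 + (\<Sum>i=k+1..l+1. real_of_int (z i) / (real_of_int b + 1)^i)"
    and c2: "z (l+1) \<le> b"
    and c3: "real_of_int (z 1) + (\<Sum>i=2..l+1. real_of_int (z i) / (real_of_int b + 1)^i) \<ge> 0"
  shows "(\<forall>k\<in>{1..l}. z k = 0 \<or> z k = 1) \<and> 0 \<le> z (l+1)"
proof -
  define B where "B = real_of_int b + 1"
  have B: "B \<ge> 2" using b B_def by simp
  have Bpow: "1/B^k \<le> 1/2" if "k \<ge> 1" for k :: nat
  proof -
    have "B^1 \<le> B^k" using B that by (intro power_increasing) auto
    then have "2 \<le> B^k" using B by simp
    then show ?thesis by (simp add: field_simps)
  qed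
  define T where "T k = (\<Sum>i=k..l+1. real_of_int (z i) / B^i)" for k
  have c1': "\<forall>k\<in>{1..l}. real_of_int (z k) \<le> 1 + T (Suc k)" using c1 unfolding T_def B_def by simp
  have ubn: "\<forall>i\<in>{n..l+1}. z i \<le> b" if "n \<le> l+1" "1 \<le> n" for n
    using that
  proof (induction rule: inc_induct)
    case base then show ?case using c2 by simp
  next
    case (step n)
    have IH: "\<forall>i\<in>{Suc n..l+1}. z i \<le> b" using step by simp
    have jl: "n \<le> l+1" using step by simp
    have "T (Suc n) < 1/B^n" using tail_bound[OF b jl IH] unfolding T_def B_def by simp
    moreover have "real_of_int (z n) \<le> 1 + T (Suc n)" using c1' step by simp
    moreover have "1/B^n \<le> 1/2" using Bpow step by simp
    ultimately have "real_of_int (z n) < 2" by simp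
    then have "z n \<le> 1" by simp
    then have "z n \<le> b" using b by simp
    show ?case
    proof
      fix i assume "i \<in> {n..l+1}"
      then have "i = n \<or> i \<in> {Suc n..l+1}" by auto
      then show "z i \<le> b" using IH \<open>z n \<le> b\<close> by auto
    qed
  qed
  have ub: "\<forall>i\<in>{1..l+1}. z i \<le> b" using ubn[of 1] by simp
  have tl: "T (Suc j) < 1/B^j" if "j \<le> l+1" for j
  proof -
    have ubj: "\<forall>i\<in>{Suc j..l+1}. z i \<le> b" using ub that by auto
    show ?thesis using tail_bound[OF b that ubj] unfolding T_def B_def by simp
  qed
  have ub1: "z k \<le> 1" if "k \<in> {1..l}" for k
  proof -
    have "T (Suc k) < 1/B^k" using tl that by simp
    moreover have "real_of_int (z k) \<le> 1 + T (Suc k)" using c1' that by simp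
    moreover have "1/B^k \<le> 1/2" using Bpow that by simp
    ultimately have "real_of_int (z k) < 2" by simp
    then show ?thesis by simp
  qed
  have Tsplit: "T k = real_of_int (z k) / B^k + T (Suc k)" if "k \<le> l+1" for k
    unfolding T_def by (rule sum.atLeast_Suc_atMost[OF that])
  have K: "z k \<ge> 0" if "k \<le> l+1" "T k \<ge> 0" for k
  proof (rule ccontr)
    assume "\<not> z k \<ge> 0"
    then have "real_of_int (z k) \<le> -1" by simp
    moreover have "B^k > 0" using B by simp
    ultimately have "real_of_int (z k) / B^k \<le> -1 / B^k" by (intro divide_right_mono) auto
    then have "real_of_int (z k) / B^k \<le> -(1 / B^k)" by simp
    then have "T k < 0" using Tsplit[OF that(1)] tl[OF that(1)] by linarith
    then show False using that by linarith
  qed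
  show ?thesis
  proof (cases "l = 0")
    case True
    then show ?thesis using c3 by simp
  next
    case False
    have S: "T 2 < 1/B" using tl[of 1] by (simp add: numeral_2_eq_2)
    have "1/B \<le> 1/2" using Bpow[of 1] by simp
    have c3': "real_of_int (z 1) + T 2 \<ge> 0" using c3 unfolding T_def B_def by simp
    have z1u: "z 1 \<le> 1" using ub1 False by simp
    have "real_of_int (z 1) > -1" using S c3' \<open>1/B \<le> 1/2\<close> by simp
    then have z1l: "z 1 \<ge> 0" by simp
    have T2: "T 2 \<ge> 0"
    proof (cases "z 1 = 0")
      case True then show ?thesis using c3' by simp
    next
      case False
      then have "z 1 = 1" using z1u z1l by simp
      moreover have "real_of_int (z 1) \<le> 1 + T (Suc 1)" using c1' \<open>l \<noteq> 0\<close> by simp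
      ultimately show ?thesis by (simp add: numeral_2_eq_2)
    qed
    have Tn: "n + 2 \<le> l + 1 \<Longrightarrow> T (n+2) \<ge> 0" for n
    proof (induction n)
      case 0 then show ?case using T2 by (simp add: numeral_2_eq_2)
    next
      case (Suc n)
      have nl: "n + 2 \<le> l + 1" using Suc.prems by linarith
      have h: "T (n+2) \<ge> 0" using Suc.IH[OF nl] .
      have zl: "z (n+2) \<ge> 0" using K[OF nl h] .
      have nk: "n + 2 \<in> {1..l}" using Suc.prems by auto
      have zu: "z (n+2) \<le> 1" using ub1[OF nk] .
      have sp: "T (n+2) = real_of_int (z (n+2)) / B^(n+2) + T (Suc (n+2))"
        using Tsplit[OF nl] .
      have eq: "Suc n + 2 = Suc (n + 2)" by simp
      have cc: "real_of_int (z (n+2)) \<le> 1 + T (Suc (n+2))" using c1' nk by blast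
      show ?case
      proof (cases "z (n+2) = 0")
        case True then show ?thesis using sp h eq by simp
      next
        case False
        then have "z (n+2) = 1" using zl zu by simp
        then show ?thesis using cc eq by simp
      qed
    qed
    have A1: "\<forall>k\<in>{1..l}. z k = 0 \<or> z k = 1"
    proof
      fix k assume k: "k \<in> {1..l}"
      show "z k = 0 \<or> z k = 1"
      proof (cases "k = 1")
        case True then show ?thesis using z1l z1u by auto
      next
        case False
        then have kk: "k - 2 + 2 = k" "k - 2 + 2 \<le> l + 1" using k by auto
        then have "T k \<ge> 0" using Tn[OF kk(2)] by simp
        moreover have "k \<le> l + 1" using k by simp
        ultimately have "z k \<ge> 0" using K by blast
        then show ?thesis using ub1[OF k] by auto
      qed
    qed
    have ll: "l - 1 + 2 = l + 1" "l - 1 + 2 \<le> l + 1" using False by auto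
    then have "T (l+1) \<ge> 0" using Tn[OF ll(2)] by simp
    then have "z (l+1) \<ge> 0" using K[of "l+1"] by simp
    with A1 show ?thesis by simp
  qed
qed

lemma split_range: "(\<forall>k\<in>{0..l+1::nat}. Q k) \<longleftrightarrow> Q 0 \<and> (\<forall>k\<in>{1..l}. Q k) \<and> Q (l+1)"
proof
  assume a: "Q 0 \<and> (\<forall>k\<in>{1..l}. Q k) \<and> Q (l+1)"
  show "\<forall>k\<in>{0..l+1::nat}. Q k"
  proof
    fix k assume "k \<in> {0..l+1}"
    then have "k = 0 \<or> k \<in> {1..l} \<or> k = l+1" by auto
    then show "Q k" using a by auto
  qed
qed auto

theorem lemma5p1:
  fixes b :: int and l :: nat and c :: "nat \<Rightarrow> 'n::finite"
  assumes "b > 0"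
    and "bij_betw c {1..l+1} (UNIV :: 'n set)"
  defines "X \<equiv> {x :: real^'n. (\<forall>k\<in>{1..l}. x $ c k \<in> {0, 1})
                   \<and> (\<exists>j::int. 0 \<le> j \<and> j \<le> b \<and> x $ c (l+1) = of_int j)}"
    and "P \<equiv> {x :: real^'n.
              (\<forall>k\<in>{1..l}. x $ c k \<le> 1 + (\<Sum>i=k+1..l+1. x $ c i / (of_int b + 1) ^ i))
            \<and> x $ c (l+1) \<le> of_int b
            \<and> x $ c 1 + (\<Sum>i=2..l+1. x $ c i / (of_int b + 1) ^ i) \<ge> 0}"
  shows "P \<inter> int_points = X \<and> rc X \<le> l + 2"
proof -
  define B where "B = (of_int b + 1 :: real)"
  have Bpos: "B > 0" using assms(1) B_def by simp
  have inj: "inj_on c {1..l+1}" using bij_betw_imp_inj_on[OF assms(2)] .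
  have surj: "c ` {1..l+1} = UNIV" using bij_betw_imp_surj_on[OF assms(2)] .
  have PX: "P \<inter> int_points = X"
  proof
    show "P \<inter> int_points \<subseteq> X"
    proof
      fix x assume x: "x \<in> P \<inter> int_points"
      define z where "z i = \<lfloor>x $ c i\<rfloor>" for i
      have xz: "x $ c i = real_of_int (z i)" for i
      proof -
        have "x $ c i \<in> \<int>" using x unfolding int_points_def by auto
        then obtain n where "x $ c i = of_int n" by (auto elim: Ints_cases)
        then show ?thesis by (simp add: z_def)
      qed
      have xP: "x \<in> P" using x by simp
      have c1: "\<forall>k\<in>{1..l}. real_of_int (z k) \<le> 1 + (\<Sum>i=k+1..l+1. real_of_int (z i) / (real_of_int b + 1)^i)"
        and c2: "z (l+1) \<le> b"
        and c3: "real_of_int (z 1) + (\<Sum>i=2..l+1. real_of_int (z i) / (real_of_int b + 1)^i) \<ge> 0"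
      proof -
        have all: "(\<forall>k\<in>{1..l}. real_of_int (z k) \<le> 1 + (\<Sum>i=k+1..l+1. real_of_int (z i) / (real_of_int b + 1)^i))
          \<and> real_of_int (z (l+1)) \<le> real_of_int b
          \<and> real_of_int (z 1) + (\<Sum>i=2..l+1. real_of_int (z i) / (real_of_int b + 1)^i) \<ge> 0"
          using xP unfolding P_def mem_Collect_eq xz .
        then show "\<forall>k\<in>{1..l}. real_of_int (z k) \<le> 1 + (\<Sum>i=k+1..l+1. real_of_int (z i) / (real_of_int b + 1)^i)"
          and "z (l+1) \<le> b"
          and "real_of_int (z 1) + (\<Sum>i=2..l+1. real_of_int (z i) / (real_of_int b + 1)^i) \<ge> 0"
          by (blast, linarith, blast)
      qed
      have r: "(\<forall>k\<in>{1..l}. z k = 0 \<or> z k = 1) \<and> 0 \<le> z (l+1)"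
        using core[OF assms(1) c1 c2 c3] .
      have X1: "\<forall>k\<in>{1..l}. x $ c k \<in> {0, 1}"
      proof
        fix k assume "k \<in> {1..l}"
        then have "z k = 0 \<or> z k = 1" using r by blast
        then show "x $ c k \<in> {0, 1}" unfolding xz by auto
      qed
      have X2: "\<exists>j::int. 0 \<le> j \<and> j \<le> b \<and> x $ c (l+1) = of_int j"
        using r c2 xz[of "l+1"] by blast
      show "x \<in> X" unfolding X_def mem_Collect_eq using X1 X2 by (rule conjI)
    qed
    show "X \<subseteq> P \<inter> int_points"
    proof
      fix x assume x: "x \<in> X"
      have nn: "x $ c i \<ge> 0" if "i \<in> {1..l+1}" for i
      proof (cases "i \<le> l")
        case True then have "i \<in> {1..l}" using that by simp
        then have "x $ c i \<in> {0,1}" using x unfolding X_def by blast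
        then show ?thesis by auto
      next
        case False then have "i = l+1" using that by simp
        then show ?thesis using x unfolding X_def by auto
      qed
      have "x \<in> int_points"
        unfolding int_points_def
      proof (intro CollectI allI)
        fix j :: 'n
        obtain i where i: "i \<in> {1..l+1}" "j = c i" using surj by blast
        show "x $ j \<in> \<int>"
        proof (cases "i \<le> l")
          case True then have "i \<in> {1..l}" using i by simp
          then have "x $ c i \<in> {0,1}" using x unfolding X_def by blast
          then show ?thesis using i by auto
        next
          case False then have "i = l+1" using i by simp
          then show ?thesis using x i unfolding X_def by auto
        qed
      qed
      moreover have "x \<in> P"
      proof -
        have sn: "(\<Sum>i=m..l+1. x $ c i / (of_int b + 1) ^ i) \<ge> 0" if "m \<ge> 1" for m
        proof (rule sum_nonneg)
          fix i assume "i \<in> {m..l+1}"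
          then have "i \<in> {1..l+1}" using that by simp
          then have "x $ c i \<ge> 0" by (rule nn)
          moreover have "(of_int b + 1::real) ^ i > 0" using Bpos unfolding B_def by simp
          ultimately show "x $ c i / (of_int b + 1) ^ i \<ge> 0" by simp
        qed
        have "\<forall>k\<in>{1..l}. x $ c k \<le> 1 + (\<Sum>i=k+1..l+1. x $ c i / (of_int b + 1) ^ i)"
        proof
          fix k assume k: "k \<in> {1..l}"
          then have "x $ c k \<in> {0,1}" using x unfolding X_def by blast
          then have "x $ c k \<le> 1" by auto
          then show "x $ c k \<le> 1 + (\<Sum>i=k+1..l+1. x $ c i / (of_int b + 1) ^ i)"
            using sn[of "k+1"] by linarith
        qed
        moreover have "x $ c (l+1) \<le> of_int b" using x unfolding X_def by auto
        moreover have "x $ c 1 + (\<Sum>i=2..l+1. x $ c i / (of_int b + 1) ^ i) \<ge> 0"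
        proof -
          have "x $ c 1 \<ge> 0" using nn by simp
          then show ?thesis using sn[of 2] by linarith
        qed
        ultimately show ?thesis unfolding P_def mem_Collect_eq by blast
      qed
      ultimately show "x \<in> P \<inter> int_points" by simp
    qed
  qed
  define A :: "nat \<Rightarrow> real^'n" where "A k = (if k = 0 then -(axis (c 1) 1 + (\<Sum>i=2..l+1. axis (c i) (1/B^i)))
      else if k = l+1 then axis (c (l+1)) 1 else axis (c k) 1 - (\<Sum>i=k+1..l+1. axis (c i) (1/B^i)))" for k
  define \<beta> where "\<beta> k = (if k = 0 then 0 else if k = l+1 then of_int b else 1::real)" for k
  have Ax: "A k \<bullet> x = (if k=0 then -(x$c 1 + (\<Sum>i=2..l+1. x$c i / B^i)) else if k = l+1 then x $ c (l+1)
      else x$c k - (\<Sum>i=k+1..l+1. x$c i / B^i))" for k x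
  proof -
    have si: "(\<Sum>i\<in>I. axis (c i) (1/B^i)) \<bullet> x = (\<Sum>i\<in>I. x $ c i / B^i)" for I
      by (simp add: inner_sum_left axis_inner_real)
    have a1: "axis j (1::real) \<bullet> x = x $ j" for j by (simp add: axis_inner_real)
    show ?thesis unfolding A_def
      by (simp only: inner_diff_left inner_add_left inner_minus_left si a1 if_distrib[where f="\<lambda>v. v \<bullet> x"])
  qed
  define H where "H k = {x. A k \<bullet> x \<le> \<beta> k}" for k
  have ne: "(l + 1 = (0::nat)) = False" by simp
  have A0x: "A 0 \<bullet> x = -(x$c 1 + (\<Sum>i=2..l+1. x$c i / B^i))" for x
    using Ax[of 0 x] by (simp only: simp_thms if_True)
  have ALx: "A (l+1) \<bullet> x = x $ c (l+1)" for x
    using Ax[of "l+1" x] by (simp only: simp_thms if_True if_False ne)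
  have Akx: "A k \<bullet> x = x$c k - (\<Sum>i=k+1..l+1. x$c i / B^i)" if k: "k \<in> {1..l}" for k x
  proof -
    have k1: "(k = 0) = False" "(k = l+1) = False" using k by auto
    show ?thesis using Ax[of k x] by (simp only: k1 if_False)
  qed
  have b0: "\<beta> 0 = 0" unfolding \<beta>_def by (simp only: simp_thms if_True)
  have bL: "\<beta> (l+1) = of_int b" unfolding \<beta>_def by (simp only: simp_thms if_True if_False ne)
  have bk: "\<beta> k = 1" if k: "k \<in> {1..l}" for k
  proof -
    have k1: "(k = 0) = False" "(k = l+1) = False" using k by auto
    show ?thesis unfolding \<beta>_def by (simp only: k1 if_False)
  qed
  have P_eq: "P = \<Inter> (H ` {0..l+1})"
  proof -
    have "x \<in> P \<longleftrightarrow> (\<forall>k\<in>{0..l+1}. x \<in> H k)" for x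
    proof -
      have p: "x \<in> P \<longleftrightarrow> (\<forall>k\<in>{1..l}. x$c k \<le> 1 + (\<Sum>i=k+1..l+1. x$c i / B^i))
          \<and> x$c (l+1) \<le> of_int b \<and> x$c 1 + (\<Sum>i=2..l+1. x$c i / B^i) \<ge> 0"
        unfolding P_def B_def by (simp only: mem_Collect_eq)
      have e1: "(\<forall>k\<in>{1..l}. x \<in> H k) \<longleftrightarrow> (\<forall>k\<in>{1..l}. x$c k \<le> 1 + (\<Sum>i=k+1..l+1. x$c i / B^i))"
      proof (rule ball_cong[OF refl])
        fix k assume k: "k \<in> {1..l}"
        show "x \<in> H k \<longleftrightarrow> x$c k \<le> 1 + (\<Sum>i=k+1..l+1. x$c i / B^i)"
          unfolding H_def mem_Collect_eq Akx[OF k] bk[OF k] by (intro iffI) linarith+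
      qed
      have e0: "x \<in> H 0 \<longleftrightarrow> x$c 1 + (\<Sum>i=2..l+1. x$c i / B^i) \<ge> 0"
        unfolding H_def mem_Collect_eq A0x b0 by (intro iffI) linarith+
      have eL: "x \<in> H (l+1) \<longleftrightarrow> x$c (l+1) \<le> of_int b"
        unfolding H_def mem_Collect_eq ALx bL by (rule refl)
      show ?thesis unfolding split_range[where Q="\<lambda>k. x \<in> H k"] p e1 e0 eL by blast
    qed
    then show ?thesis by blast
  qed
  have Anz: "A k \<noteq> 0" if k: "k \<in> {0..l+1}" for k
  proof
    assume A0: "A k = 0"
    define k' where "k' = (if k = 0 then 1 else k)"
    have k': "k' \<in> {1..l+1}" using k k'_def by auto
    define e :: "real^'n" where "e = axis (c k') 1"
    have e1: "e $ c k' = 1" unfolding e_def by (rule axis_nth)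
    have ec: "e $ c i = 0" if "i \<in> {1..l+1}" "i \<noteq> k'" for i
    proof -
      have "c i \<noteq> c k'" using inj_on_contraD[OF inj that(2) that(1) k'] .
      then show ?thesis unfolding e_def axis_def by (simp only: vec_lambda_beta if_False)
    qed
    have zs: "(\<Sum>i=m..l+1. e $ c i / B^i) = 0" if "m > k'" for m
    proof (rule sum.neutral, rule ballI)
      fix i assume i: "i \<in> {m..l+1}"
      then have "i \<in> {1..l+1}" "i \<noteq> k'" using that k' by auto
      then have "e $ c i = 0" by (rule ec)
      then show "e $ c i / B^i = 0" by simp
    qed
    have "A k \<bullet> e = 0" using A0 by simp
    moreover have "A k \<bullet> e = -1 \<or> A k \<bullet> e = 1"
    proof -
      have "k = 0 \<or> k \<in> {1..l} \<or> k = l+1" using k by auto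
      moreover
      { assume "k = 0"
        then have kk: "k' = 1" using k'_def by simp
        have "A 0 \<bullet> e = -(e$c 1 + (\<Sum>i=2..l+1. e$c i / B^i))" by (rule A0x)
        moreover have "(\<Sum>i=2..l+1. e$c i / B^i) = 0" using zs[of 2] kk by simp
        moreover have "e $ c 1 = 1" using e1 kk by simp
        ultimately have "A k \<bullet> e = -1" using \<open>k = 0\<close> by simp }
      moreover
      { assume kin: "k \<in> {1..l}"
        then have kk: "k' = k" using k'_def by simp
        have "A k \<bullet> e = e$c k - (\<Sum>i=k+1..l+1. e$c i / B^i)" by (rule Akx[OF kin])
        moreover have "(\<Sum>i=k+1..l+1. e$c i / B^i) = 0" using zs[of "k+1"] kk by simp
        moreover have "e $ c k = 1" using e1 kk by simp
        ultimately have "A k \<bullet> e = 1" by simp }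
      moreover
      { assume kl: "k = l+1"
        then have kk: "k' = l+1" using k'_def by simp
        have "A (l+1) \<bullet> e = e $ c (l+1)" by (rule ALx)
        then have "A k \<bullet> e = 1" using e1 kk kl by simp }
      ultimately show ?thesis by blast
    qed
    ultimately show False by simp
  qed
  have hs: "\<forall>h\<in>H ` {0..l+1}. \<exists>a b. a \<noteq> 0 \<and> h = {x. a \<bullet> x \<le> b}"
  proof
    fix h assume "h \<in> H ` {0..l+1}"
    then obtain k where k: "k \<in> {0..l+1}" "h = H k" by blast
    have "A k \<noteq> 0 \<and> h = {x. A k \<bullet> x \<le> \<beta> k}" using Anz[OF k(1)] k(2) H_def by simp
    then show "\<exists>a b. a \<noteq> 0 \<and> h = {x. a \<bullet> x \<le> b}" by blast
  qed
  have polyP: "polyhedron P"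
  proof -
    have "polyhedron h" if h: "h \<in> H ` {0..l+1}" for h
    proof -
      obtain a b where "h = {x. a \<bullet> x \<le> b}" using hs h by blast
      then show ?thesis by (simp add: polyhedron_halfspace_le)
    qed
    then show ?thesis unfolding P_eq by (intro polyhedron_Inter) auto
  qed
  have fin: "finite (H ` {0..l+1})" by simp
  have "card {F. F facet_of P} \<le> card (H ` {0..l+1})"
    by (rule facets_card_le[OF fin P_eq hs])
  also have "\<dots> \<le> card {0..l+1}" by (rule card_image_le) simp
  finally have cardF: "card {F. F facet_of P} \<le> l + 2" by simp
  have ex: "\<exists>P'. polyhedron P' \<and> P' \<inter> int_points = X \<and> card {F. F facet_of P'} = card {F. F facet_of P}"
    using polyP PX by (intro exI[of _ P]) simp
  have rcle: "rc X \<le> card {F. F facet_of P}"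
    unfolding rc_def by (rule Least_le) (rule ex)
  show ?thesis using PX le_trans[OF rcle cardF] by (rule conjI)
qed

end
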